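(* Let $e$ be a closed term with $\vdash e:\perp\to X$, where $X$ is a propositional variable. Then for each term $u$ and each finite sequence of terms $\bar v$, $(e\;u)\;\bar v\triangleright^*\underline{\mu}.u$, i.e. $(e\;u)\;\bar v$ reduces to some element of $M_u$.
   Context: $\lambda\mu$-terms: $t::= x\mid \lambda x.t\mid (t\;t)\mid \mu a.t\mid (a\;t)$ over disjoint infinite sets of $\lambda$-variables and $\mu$-variables; types built from propositional variables and $\perp$ with $\to$. Reduction $(\lambda x.u\;v)\triangleright u[x:=v]$, $(\mu a.u\;v)\triangleright\mu a.u[a:=^*v]$ ($u[a:=^*v]$ replaces each subterm $(a\;w)$ of $u$ by $(a\;(w\;v))$), $\triangleright^*$ its reflexive transitive compatible closure. Typing rules: (ax) $\Gamma\vdash x:A;\Delta$ if $x:A\in\Gamma$; ($\to_i$) from $\Gamma,x:A\vdash t:B;\Delta$ infer $\Gamma\vdash\lambda x.t:A\to B;\Delta$; ($\to_e$) from $\Gamma\vdash u:A\to B;\Delta$, $\Gamma\vdash v:A;\Delta$ infer $\Gamma\vdash(u\;v):B;\Delta$; ($\mu$) from $\Gamma\vdash t:\perp;\Delta,a:A$ infer $\Gamma\vdash\mu a.t:A;\Delta$; ($\perp$) from $\Gamma\vdash t:A;\Delta,a:A$ infer $\Gamma\vdash(a\;t):\perp;\Delta,a:A$; $\vdash$ means empty contexts. For a sequence $\bar v=v_1\dots v_n$, $t\;\bar v=((t\;v_1)\dots v_n)$. For a term $t$, $M_t$ is the smallest set containing $t$ such that $w\in M_t$ and $a$ a $\mu$-variable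 imply $\mu a.w\in M_t$ and $(a\;w)\in M_t$; $\underline{\mu}.t$ denotes an arbitrary element of $M_t$. *)

theory Defs
  imports Main
begin

text \<open>Lambda-mu terms in de Bruijn notation, with two disjoint sorts of
indices: lambda-variables (bound by Lam) and mu-variables (bound by Mu).
  Var i      : lambda-variable x
  Lam t      : \<lambda>x.t
  App t s    : (t s)
  Mu t       : \<mu>a.t
  Named a t  : (a t)\<close>

datatype trm = Var nat | Lam trm | App trm trm | Mu trm | Named nat trm

datatype ty = PV nat | Bot | Arr ty ty

fun liftL :: "nat \<Rightarrow> trm \<Rightarrow> trm" where
  "liftL k (Var i) = (if i < k then Var i else Var (Suc i))"
| "liftL k (Lam t) = Lam (liftL (Suc k) t)"
| "liftL k (App t s) = App (liftL k t) (liftL k s)"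
| "liftL k (Mu t) = Mu (liftL k t)"
| "liftL k (Named a t) = Named a (liftL k t)"

fun liftM :: "nat \<Rightarrow> trm \<Rightarrow> trm" where
  "liftM k (Var i) = Var i"
| "liftM k (Lam t) = Lam (liftM k t)"
| "liftM k (App t s) = App (liftM k t) (liftM k s)"
| "liftM k (Mu t) = Mu (liftM (Suc k) t)"
| "liftM k (Named a t) = Named (if a < k then a else Suc a) (liftM k t)"

fun substL :: "nat \<Rightarrow> trm \<Rightarrow> trm \<Rightarrow> trm" where
  "substL k v (Var i) = (if i < k then Var i else if i = k then v else Var (i - 1))"
| "substL k v (Lam t) = Lam (substL (Suc k) (liftL 0 v) t)"
| "substL k v (App t s) = App (substL k v t) (substL k v s)"
| "substL k v (Mu t) = Mu (substL k (liftM 0 v) t)"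
| "substL k v (Named a t) = Named a (substL k v t)"

fun substM :: "nat \<Rightarrow> trm \<Rightarrow> trm \<Rightarrow> trm" where
  "substM k v (Var i) = Var i"
| "substM k v (Lam t) = Lam (substM k (liftL 0 v) t)"
| "substM k v (App t s) = App (substM k v t) (substM k v s)"
| "substM k v (Mu t) = Mu (substM (Suc k) (liftM 0 v) t)"
| "substM k v (Named a t) =
     (if a = k then Named a (App (substM k v t) v) else Named a (substM k v t))"

inductive red1 :: "trm \<Rightarrow> trm \<Rightarrow> bool" where
  beta: "red1 (App (Lam u) v) (substL 0 v u)"
| mu:   "red1 (App (Mu u) v) (Mu (substM 0 (liftM 0 v) u))"
| lam:  "red1 t t' \<Longrightarrow> red1 (Lam t) (Lam t')"
| appL: "red1 t t' \<Longrightarrow> red1 (App t s) (App t' s)"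
| appR: "red1 s s' \<Longrightarrow> red1 (App t s) (App t s')"
| muC:  "red1 t t' \<Longrightarrow> red1 (Mu t) (Mu t')"
| named: "red1 t t' \<Longrightarrow> red1 (Named a t) (Named a t')"

abbreviation red :: "trm \<Rightarrow> trm \<Rightarrow> bool" where
  "red \<equiv> red1\<^sup>*\<^sup>*"

inductive typing :: "ty list \<Rightarrow> ty list \<Rightarrow> trm \<Rightarrow> ty \<Rightarrow> bool" where
  ax:   "i < length \<Gamma> \<Longrightarrow> \<Gamma> ! i = A \<Longrightarrow> typing \<Gamma> \<Delta> (Var i) A"
| arrI: "typing (A # \<Gamma>) \<Delta> t B \<Longrightarrow> typing \<Gamma> \<Delta> (Lam t) (Arr A B)"
| arrE: "typing \<Gamma> \<Delta> u (Arr A B) \<Longrightarrow> typing \<Gamma> \<Delta> v A \<Longrightarrow> typing \<Gamma> \<Delta> (App u v) B"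
| muI:  "typing \<Gamma> (A # \<Delta>) t Bot \<Longrightarrow> typing \<Gamma> \<Delta> (Mu t) A"
| botI: "a < length \<Delta> \<Longrightarrow> \<Delta> ! a = A \<Longrightarrow> typing \<Gamma> \<Delta> t A \<Longrightarrow> typing \<Gamma> \<Delta> (Named a t) Bot"

text \<open>In de Bruijn form, \<mu>a.w (with a fresh for t, as under the
variable convention) belongs to M_t iff w belongs to M of t with its mu-indices
shifted.\<close>

inductive inM :: "trm \<Rightarrow> trm \<Rightarrow> bool" where
  base:  "inM t t"
| named: "inM t w \<Longrightarrow> inM t (Named a w)"
| mu:    "inM (liftM 0 t) w \<Longrightarrow> inM t (Mu w)"

definition apps :: "trm \<Rightarrow> trm list \<Rightarrow> trm" where
  "apps t vs = foldl App t vs"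

definition closed :: "trm \<Rightarrow> bool" where
  "closed t \<longleftrightarrow> liftL 0 t = t \<and> liftM 0 t = t"

end

theory Submission
  imports Defs
begin
definition extr :: "(nat \<Rightarrow> nat) \<Rightarrow> nat \<Rightarrow> nat" where
  "extr r a = (case a of 0 \<Rightarrow> 0 | Suc b \<Rightarrow> Suc (r b))"

lemma extr_simps[simp]: "extr r 0 = 0" "extr r (Suc b) = Suc (r b)"
  by (auto simp: extr_def)

fun renM :: "(nat \<Rightarrow> nat) \<Rightarrow> trm \<Rightarrow> trm" where
  "renM r (Var i) = Var i"
| "renM r (Lam t) = Lam (renM r t)"
| "renM r (App t s) = App (renM r t) (renM r s)"
| "renM r (Mu t) = Mu (renM (extr r) t)"
| "renM r (Named a t) = Named (r a) (renM r t)"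

lemma extr_comp: "extr r \<circ> extr r' = extr (r \<circ> r')"
  by (auto simp: fun_eq_iff extr_def split: nat.splits)

lemma renM_comp: "renM r (renM r' t) = renM (r \<circ> r') t"
  by (induction t arbitrary: r r') (simp_all add: extr_comp[symmetric])

lemma renM_comp': "renM r (renM r' t) = renM (\<lambda>a. r (r' a)) t"
  using renM_comp[of r r' t] by (simp add: comp_def)

lemma extr_id: "extr (\<lambda>a. a) = (\<lambda>a. a)"
  by (auto simp: fun_eq_iff extr_def split: nat.splits)

lemma renM_id[simp]: "renM (\<lambda>a. a) t = t"
  by (induction t) (auto simp: extr_id)

lemma renM_id'[simp]: "renM id t = t"
  using renM_id by (simp add: id_def)

lemma liftM_renM: "liftM k t = renM (\<lambda>a. if a < k then a else Suc a) t"
proof (induction t arbitrary: k)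
  case (Mu t)
  have "extr (\<lambda>a. if a < k then a else Suc a) = (\<lambda>a. if a < Suc k then a else Suc a)"
    by (auto simp: fun_eq_iff extr_def split: nat.splits)
  then show ?case using Mu by simp
qed auto

lemma liftM0[simp]: "liftM 0 t = renM Suc t"
  by (simp add: liftM_renM)

lemma extr_Suc: "extr r \<circ> Suc = Suc \<circ> r"
  by auto

lemma renM_Suc_comm: "renM (extr r) (renM Suc t) = renM Suc (renM r t)"
  by (simp add: renM_comp extr_Suc)

lemma renM_liftL: "renM r (liftL k t) = liftL k (renM r t)"
  by (induction t arbitrary: k r) auto

lemma liftL_liftL: "i \<le> j \<Longrightarrow> liftL (Suc j) (liftL i s) = liftL i (liftL j s)"
  by (induction s arbitrary: i j) auto

lemma substL_liftL_id: "substL k s (liftL k x) = x"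
  by (induction x arbitrary: k s) auto

lemma liftL_substL: "j \<le> k \<Longrightarrow> liftL j (substL k s x) = substL (Suc k) (liftL j s) (liftL j x)"
  by (induction x arbitrary: j k s) (auto simp: liftL_liftL renM_liftL)

lemma renM_substL: "renM r (substL k s x) = substL k (renM r s) (renM r x)"
  by (induction x arbitrary: r k s) (auto simp: renM_liftL renM_Suc_comm)

lemma substL_substL: "j \<le> k \<Longrightarrow>
  substL k s (substL j v u) = substL j (substL k s v) (substL (Suc k) (liftL j s) u)"
proof (induction u arbitrary: j k s v)
  case (Var i)
  then show ?case by (auto simp: substL_liftL_id)
next
  case (Lam u)
  then show ?case by (simp add: liftL_substL liftL_liftL)
next
  case (Mu u)
  then show ?case by (simp add: renM_substL renM_liftL)
qed auto

fun mfree :: "nat \<Rightarrow> trm \<Rightarrow> bool" where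
  "mfree k (Var i) = True"
| "mfree k (Lam t) = mfree k t"
| "mfree k (App t s) = (mfree k t \<and> mfree k s)"
| "mfree k (Mu t) = mfree (Suc k) t"
| "mfree k (Named a t) = (a \<noteq> k \<and> mfree k t)"

lemma mfree_substM: "mfree k t \<Longrightarrow> substM k v t = t"
  by (induction t arbitrary: k v) auto

lemma mfree_liftL: "mfree k t \<Longrightarrow> mfree k (liftL j t)"
  by (induction t arbitrary: k j) auto

lemma mfree_renM: "mfree k t \<Longrightarrow> (\<And>a. r a = k' \<Longrightarrow> a = k) \<Longrightarrow> mfree k' (renM r t)"
proof (induction t arbitrary: k k' r)
  case (Mu t)
  have "\<And>a. extr r a = Suc k' \<Longrightarrow> a = Suc k"
    using Mu.prems(2) by (auto simp: extr_def split: nat.splits)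
  then show ?case using Mu by simp
qed auto

lemma mfree_renM_Suc: "mfree k t \<Longrightarrow> mfree (Suc k) (renM Suc t)"
  by (erule mfree_renM) auto

lemma mfree_renM_0: "(\<And>a. r a \<noteq> k) \<Longrightarrow> mfree k (renM r t)"
proof (induction t arbitrary: k r)
  case (Mu t)
  have "\<And>a. extr r a \<noteq> Suc k"
    using Mu.prems by (auto simp: extr_def split: nat.splits)
  then show ?case using Mu by simp
qed auto

lemma substL_substM: "mfree j s \<Longrightarrow>
  substL k s (substM j w u) = substM j (substL k s w) (substL k s u)"
proof (induction u arbitrary: j k s w)
  case (Var i)
  then show ?case by (auto simp: mfree_substM)
next
  case (Lam u)
  then show ?case by (simp add: liftL_substL mfree_liftL)
next
  case (Mu u)
  then show ?case by (simp add: renM_substL mfree_renM_Suc)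
qed auto

lemma renM_substM: "r k = k' \<Longrightarrow> \<forall>a. r a = k' \<longrightarrow> a = k \<Longrightarrow>
  renM r (substM k v u) = substM k' (renM r v) (renM r u)"
proof (induction u arbitrary: r k k' v)
  case (Var i)
  show ?case by simp
next
  case (Lam u)
  have "renM r (substM k (liftL 0 v) u) = substM k' (renM r (liftL 0 v)) (renM r u)"
    by (rule Lam.IH[OF Lam.prems])
  then show ?case by (simp add: renM_liftL)
next
  case (App u1 u2)
  have "renM r (substM k v u1) = substM k' (renM r v) (renM r u1)"
    by (rule App.IH(1)[OF App.prems])
  moreover have "renM r (substM k v u2) = substM k' (renM r v) (renM r u2)"
    by (rule App.IH(2)[OF App.prems])
  ultimately show ?case by simp
next
  case (Mu u)
  have "\<forall>a. extr r a = Suc k' \<longrightarrow> a = Suc k"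
  proof (intro allI impI)
    fix a assume "extr r a = Suc k'"
    then obtain b where "a = Suc b" "r b = k'" by (cases a) auto
    then show "a = Suc k" using Mu.prems(2) by blast
  qed
  moreover have "extr r (Suc k) = Suc k'" using Mu.prems(1) by simp
  ultimately have "renM (extr r) (substM (Suc k) (renM Suc v) u) = substM (Suc k') (renM (extr r) (renM Suc v)) (renM (extr r) u)"
    using Mu.IH by blast
  then show ?case by (simp add: renM_Suc_comm)
next
  case (Named a u)
  have IH: "renM r (substM k v u) = substM k' (renM r v) (renM r u)"
    by (rule Named.IH[OF Named.prems])
  show ?case
  proof (cases "a = k")
    case True
    then show ?thesis using IH Named.prems(1) by simp
  next
    case False
    then have "r a \<noteq> k'" using Named.prems(2) by blast
    then show ?thesis using IH False by simp
  qed
qed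

lemma red1_renM: "red1 t t' \<Longrightarrow> red1 (renM r t) (renM r t')"
proof (induction t t' arbitrary: r rule: red1.induct)
  case (beta u v)
  then show ?case using red1.beta[of "renM r u" "renM r v"] by (simp add: renM_substL)
next
  case (mu u v)
  have "renM (extr r) (substM 0 (renM Suc v) u) = substM 0 (renM Suc (renM r v)) (renM (extr r) u)"
    by (subst renM_substM[where k'=0]) (auto simp: extr_def renM_Suc_comm split: nat.splits)
  then show ?case using red1.mu[of "renM (extr r) u" "renM r v"] by simp
qed (auto intro: red1.intros)

lemma red1_substL: "red1 t t' \<Longrightarrow> red1 (substL k s t) (substL k s t')"
proof (induction t t' arbitrary: k s rule: red1.induct)
  case (beta u v)
  then show ?case using red1.beta[of "substL (Suc k) (liftL 0 s) u" "substL k s v"]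
    by (simp add: substL_substL)
next
  case (mu u v)
  have "substL k (renM Suc s) (substM 0 (renM Suc v) u) = substM 0 (renM Suc (substL k s v)) (substL k (renM Suc s) u)"
    by (simp add: substL_substM mfree_renM_0 renM_substL)
  then show ?case using red1.mu[of "substL k (renM Suc s) u" "substL k s v"] by simp
qed (auto intro: red1.intros)

lemma red_renM: "red t t' \<Longrightarrow> red (renM r t) (renM r t')"
  by (induction rule: rtranclp_induct) (auto intro: rtranclp.rtrancl_into_rtrancl red1_renM)

lemma red_substL: "red t t' \<Longrightarrow> red (substL k s t) (substL k s t')"
  by (induction rule: rtranclp_induct) (auto intro: rtranclp.rtrancl_into_rtrancl red1_substL)

lemma red_appL: "red t t' \<Longrightarrow> red (App t s) (App t' s)"
  by (induction rule: rtranclp_induct) (auto intro: rtranclp.rtrancl_into_rtrancl red1.appL)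

lemma red_apps: "red t t' \<Longrightarrow> red (apps t vs) (apps t' vs)"
  by (induction vs arbitrary: t t') (auto simp: apps_def intro: red_appL)

lemma red_Mu: "red t t' \<Longrightarrow> red (Mu t) (Mu t')"
  by (induction rule: rtranclp_induct) (auto intro: rtranclp.rtrancl_into_rtrancl red1.muC)

lemma red_Named: "red t t' \<Longrightarrow> red (Named a t) (Named a t')"
  by (induction rule: rtranclp_induct) (auto intro: rtranclp.rtrancl_into_rtrancl red1.named)


lemma apps_simps[simp]: "apps t [] = t" "apps t (x # xs) = apps (App t x) xs"
  "apps t (xs @ [x]) = App (apps t xs) x"
  by (auto simp: apps_def)

lemma renM_apps: "renM r (apps t l) = apps (renM r t) (map (renM r) l)"
  by (induction l arbitrary: t) auto

lemma substL_apps: "substL k s (apps t l) = apps (substL k s t) (map (substL k s) l)"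
  by (induction l arbitrary: t) auto

lemma substM_apps: "substM k s (apps t l) = apps (substM k s t) (map (substM k s) l)"
  by (induction l arbitrary: t) auto

definition upL :: "(nat \<Rightarrow> trm) \<Rightarrow> nat \<Rightarrow> trm" where
  "upL \<sigma> i = (case i of 0 \<Rightarrow> Var 0 | Suc j \<Rightarrow> liftL 0 (\<sigma> j))"

lemma upL_simps[simp]: "upL \<sigma> 0 = Var 0" "upL \<sigma> (Suc j) = liftL 0 (\<sigma> j)"
  by (auto simp: upL_def)

definition shiftR :: "(nat \<Rightarrow> trm list) \<Rightarrow> nat \<Rightarrow> trm list" where
  "shiftR \<rho> a = (case a of 0 \<Rightarrow> [] | Suc b \<Rightarrow> map (renM Suc) (\<rho> b))"

lemma shiftR_simps[simp]: "shiftR \<rho> 0 = []" "shiftR \<rho> (Suc b) = map (renM Suc) (\<rho> b)"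
  by (auto simp: shiftR_def)

fun psubst :: "(nat \<Rightarrow> trm) \<Rightarrow> (nat \<Rightarrow> trm list) \<Rightarrow> (nat \<Rightarrow> nat) \<Rightarrow> trm \<Rightarrow> trm" where
  "psubst \<sigma> \<rho> \<nu> (Var i) = \<sigma> i"
| "psubst \<sigma> \<rho> \<nu> (Lam t) = Lam (psubst (upL \<sigma>) (\<lambda>a. map (liftL 0) (\<rho> a)) \<nu> t)"
| "psubst \<sigma> \<rho> \<nu> (App t s) = App (psubst \<sigma> \<rho> \<nu> t) (psubst \<sigma> \<rho> \<nu> s)"
| "psubst \<sigma> \<rho> \<nu> (Mu t) = Mu (psubst (\<lambda>i. renM Suc (\<sigma> i)) (shiftR \<rho>) (extr \<nu>) t)"
| "psubst \<sigma> \<rho> \<nu> (Named a t) = Named (\<nu> a) (apps (psubst \<sigma> \<rho> \<nu> t) (\<rho> a))"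

lemma renM_psubst: "renM r (psubst \<sigma> \<rho> \<nu> t) =
   psubst (\<lambda>i. renM r (\<sigma> i)) (\<lambda>a. map (renM r) (\<rho> a)) (\<lambda>a. r (\<nu> a)) t"
proof (induction t arbitrary: r \<sigma> \<rho> \<nu>)
  case (Lam t)
  have "(\<lambda>i. renM r (upL \<sigma> i)) = upL (\<lambda>i. renM r (\<sigma> i))"
    by (auto simp: fun_eq_iff upL_def renM_liftL split: nat.splits)
  moreover have "(\<lambda>a. map (renM r) (map (liftL 0) (\<rho> a))) = (\<lambda>a. map (liftL 0) (map (renM r) (\<rho> a)))"
    by (auto simp: fun_eq_iff renM_liftL)
  ultimately show ?case using Lam by simp
next
  case (Mu t)
  have "(\<lambda>i. renM (extr r) (renM Suc (\<sigma> i))) = (\<lambda>i. renM Suc (renM r (\<sigma> i)))"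
    by (simp add: renM_Suc_comm)
  moreover have "(\<lambda>a. map (renM (extr r)) (shiftR \<rho> a)) = shiftR (\<lambda>a. map (renM r) (\<rho> a))"
    by (auto simp: fun_eq_iff shiftR_def renM_Suc_comm split: nat.splits)
  moreover have "(\<lambda>a. extr r (extr \<nu> a)) = extr (\<lambda>a. r (\<nu> a))"
    by (auto simp: fun_eq_iff extr_def split: nat.splits)
  ultimately show ?case using Mu by simp
next
  case (Named a t)
  then show ?case by (simp add: renM_apps)
qed auto

lemma substL_psubst: "substL k s (psubst \<sigma> \<rho> \<nu> t) =
   psubst (\<lambda>i. substL k s (\<sigma> i)) (\<lambda>a. map (substL k s) (\<rho> a)) \<nu> t"
proof (induction t arbitrary: k s \<sigma> \<rho> \<nu>)
  case (Lam t)
  have "(\<lambda>i. substL (Suc k) (liftL 0 s) (upL \<sigma> i)) = upL (\<lambda>i. substL k s (\<sigma> i))"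
    by (auto simp: fun_eq_iff upL_def liftL_substL split: nat.splits)
  moreover have "(\<lambda>a. map (substL (Suc k) (liftL 0 s)) (map (liftL 0) (\<rho> a))) = (\<lambda>a. map (liftL 0) (map (substL k s) (\<rho> a)))"
    by (auto simp: fun_eq_iff liftL_substL)
  ultimately show ?case using Lam by simp
next
  case (Mu t)
  have "(\<lambda>i. substL k (renM Suc s) (renM Suc (\<sigma> i))) = (\<lambda>i. renM Suc (substL k s (\<sigma> i)))"
    by (simp add: renM_substL)
  moreover have "(\<lambda>a. map (substL k (renM Suc s)) (shiftR \<rho> a)) = shiftR (\<lambda>a. map (substL k s) (\<rho> a))"
    by (auto simp: fun_eq_iff shiftR_def renM_substL split: nat.splits)
  ultimately show ?case using Mu by simp
next
  case (Named a t)
  then show ?case by (simp add: substL_apps)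
qed auto

lemma substM_psubst:
  "(\<forall>i. mfree k (\<sigma> i)) \<Longrightarrow> (\<forall>a. \<forall>x\<in>set (\<rho> a). mfree k x) \<Longrightarrow>
   substM k v (psubst \<sigma> \<rho> \<nu> t) = psubst \<sigma> (\<lambda>a. if \<nu> a = k then \<rho> a @ [v] else \<rho> a) \<nu> t"
proof (induction t arbitrary: k v \<sigma> \<rho> \<nu>)
  case (Var i)
  then show ?case by (simp add: mfree_substM)
next
  case (Lam t)
  have "\<forall>i. mfree k (upL \<sigma> i)"
    using Lam.prems by (auto simp: upL_def mfree_liftL split: nat.splits)
  moreover have "\<forall>a. \<forall>x\<in>set (map (liftL 0) (\<rho> a)). mfree k x"
    using Lam.prems by (auto simp: mfree_liftL)
  moreover have "(\<lambda>a. if \<nu> a = k then map (liftL 0) (\<rho> a) @ [liftL 0 v] else map (liftL 0) (\<rho> a))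
     = (\<lambda>a. map (liftL 0) (if \<nu> a = k then \<rho> a @ [v] else \<rho> a))"
    by auto
  ultimately show ?case using Lam.IH by simp
next
  case (Mu t)
  have "\<forall>i. mfree (Suc k) (renM Suc (\<sigma> i))"
    using Mu.prems by (auto simp: mfree_renM_Suc)
  moreover have "\<forall>a. \<forall>x\<in>set (shiftR \<rho> a). mfree (Suc k) x"
    using Mu.prems by (auto simp: shiftR_def mfree_renM_Suc split: nat.splits)
  moreover have "(\<lambda>a. if extr \<nu> a = Suc k then shiftR \<rho> a @ [renM Suc v] else shiftR \<rho> a)
     = shiftR (\<lambda>a. if \<nu> a = k then \<rho> a @ [v] else \<rho> a)"
    by (auto simp: fun_eq_iff shiftR_def extr_def split: nat.splits)
  ultimately show ?case using Mu.IH by simp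
next
  case (App t1 t2)
  then show ?case by simp
next
  case (Named a t)
  have m: "map (substM k v) (\<rho> a) = \<rho> a"
    using Named.prems(2) by (auto intro: map_idI mfree_substM)
  show ?case using Named by (simp add: substM_apps m)
qed

definition Pole :: "trm set" where
  "Pole = {w. \<exists>w'. red w w' \<and> inM (Var 0) w'}"

lemma Pole_red: "red t t' \<Longrightarrow> t' \<in> Pole \<Longrightarrow> t \<in> Pole"
  unfolding Pole_def by (auto intro: rtranclp_trans)

lemma Pole_Named: "t \<in> Pole \<Longrightarrow> Named a t \<in> Pole"
  unfolding Pole_def by (auto intro: red_Named inM.named)

lemma Pole_Mu: "t \<in> Pole \<Longrightarrow> Mu t \<in> Pole"
proof -
  assume "t \<in> Pole"
  then obtain w' where "red t w'" "inM (Var 0) w'" unfolding Pole_def by auto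
  moreover have "inM (Var 0) (Mu w')"
    using inM.mu[of "Var 0" w'] \<open>inM (Var 0) w'\<close> by simp
  ultimately show ?thesis unfolding Pole_def by (auto intro: red_Mu)
qed

lemma inM_renM: "inM t w \<Longrightarrow> t = Var 0 \<Longrightarrow> inM (Var 0) (renM r w)"
proof (induction t w arbitrary: r rule: inM.induct)
  case (base t)
  then show ?case by (simp add: inM.base)
next
  case (named t w a)
  then show ?case by (simp add: inM.named)
next
  case (mu t w)
  then have "inM (Var 0) (renM (extr r) w)" by simp
  then show ?case using inM.mu[of "Var 0" "renM (extr r) w"] by simp
qed

lemma Pole_renM: "t \<in> Pole \<Longrightarrow> renM r t \<in> Pole"
  unfolding Pole_def by (auto intro: red_renM inM_renM)

fun I :: "ty \<Rightarrow> trm set" where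
  "I Bot = Pole"
| "I (PV n) = {t. \<forall>r vs. apps (renM r t) vs \<in> Pole}"
| "I (Arr A B) = {t. \<forall>r. \<forall>s\<in>I A. App (renM r t) s \<in> I B}"

fun canon :: "ty \<Rightarrow> trm list set" where
  "canon Bot = {[]}"
| "canon (PV n) = UNIV"
| "canon (Arr A B) = {s # ws | s ws. s \<in> I A \<and> ws \<in> canon B}"

lemma I_renM: "t \<in> I A \<Longrightarrow> renM r t \<in> I A"
  by (cases A) (auto simp: Pole_renM renM_comp)

lemma I_red: "red t t' \<Longrightarrow> t' \<in> I A \<Longrightarrow> t \<in> I A"
proof (induction A arbitrary: t t')
  case Bot
  then show ?case by (auto intro: Pole_red)
next
  case (PV n)
  then show ?case by (auto intro: Pole_red red_apps red_renM)
next
  case (Arr A B)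
  show ?case
  proof (simp, intro allI ballI)
    fix r s assume "s \<in> I A"
    then have "App (renM r t') s \<in> I B" using Arr.prems(2) by simp
    moreover have "red (App (renM r t) s) (App (renM r t') s)"
      using Arr.prems(1) by (intro red_appL red_renM)
    ultimately show "App (renM r t) s \<in> I B" using Arr.IH(2) by blast
  qed
qed

lemma canon_renM: "ws \<in> canon A \<Longrightarrow> map (renM r) ws \<in> canon A"
  by (induction A arbitrary: ws) (auto intro: I_renM)

lemma I_canon: "t \<in> I A \<Longrightarrow> ws \<in> canon A \<Longrightarrow> apps t ws \<in> Pole"
proof (induction A arbitrary: t ws)
  case Bot
  then show ?case by simp
next
  case (PV n)
  then show ?case using PV by (auto dest: spec[of _ id])
next
  case (Arr A B)
  then obtain s ws' where "ws = s # ws'" "s \<in> I A" "ws' \<in> canon B" by auto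
  moreover have "App t s \<in> I B" using Arr.prems \<open>s \<in> I A\<close> by (auto dest: spec[of _ id])
  ultimately show ?case using Arr.IH(2) by simp
qed

lemma canon_I: "(\<And>r ws. ws \<in> canon A \<Longrightarrow> apps (renM r t) ws \<in> Pole) \<Longrightarrow> t \<in> I A"
proof (induction A arbitrary: t)
  case Bot
  then show ?case using Bot.prems[where r=id and ws="[]"] by simp
next
  case (PV n)
  then show ?case by simp
next
  case (Arr A B)
  show ?case
  proof (simp, intro allI ballI)
    fix r s assume s: "s \<in> I A"
    show "App (renM r t) s \<in> I B"
    proof (rule Arr.IH(2))
      fix r' ws assume ws: "ws \<in> canon B"
      have "apps (renM r' (App (renM r t) s)) ws = apps (renM (r' \<circ> r) t) (renM r' s # ws)"
        by (simp add: renM_comp)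
      moreover have "renM r' s # ws \<in> canon (Arr A B)" using s ws I_renM by auto
      ultimately show "apps (renM r' (App (renM r t) s)) ws \<in> Pole" using Arr.prems by metis
    qed
  qed
qed

lemma red_apps_Mu: "red (apps (Mu b) ws) (Mu (foldl (\<lambda>x w. substM 0 (renM Suc w) x) b ws))"
proof (induction ws arbitrary: b)
  case Nil
  then show ?case by simp
next
  case (Cons w ws)
  have "red1 (App (Mu b) w) (Mu (substM 0 (renM Suc w) b))"
    using red1.mu[of b w] by simp
  then have "red (apps (Mu b) (w # ws)) (apps (Mu (substM 0 (renM Suc w) b)) ws)"
    using red_apps[OF r_into_rtranclp] by simp
  then show ?case using Cons[of "substM 0 (renM Suc w) b"] by simp
qed

lemma foldl_psubst:
  "(\<forall>i. mfree 0 (\<sigma> i)) \<Longrightarrow> (\<forall>a. \<forall>x\<in>set (\<rho> a). mfree 0 x) \<Longrightarrow> (\<forall>a. \<nu> a = 0 \<longleftrightarrow> a = 0) \<Longrightarrow>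
   foldl (\<lambda>x w. substM 0 (renM Suc w) x) (psubst \<sigma> \<rho> \<nu> b) ws
   = psubst \<sigma> (\<rho>(0 := \<rho> 0 @ map (renM Suc) ws)) \<nu> b"
proof (induction ws arbitrary: \<rho>)
  case Nil
  then show ?case by (simp add: fun_upd_idem)
next
  case (Cons w ws)
  have "substM 0 (renM Suc w) (psubst \<sigma> \<rho> \<nu> b)
     = psubst \<sigma> (\<lambda>a. if \<nu> a = 0 then \<rho> a @ [renM Suc w] else \<rho> a) \<nu> b"
    by (rule substM_psubst) (use Cons.prems in auto)
  also have "(\<lambda>a. if \<nu> a = 0 then \<rho> a @ [renM Suc w] else \<rho> a) = \<rho>(0 := \<rho> 0 @ [renM Suc w])"
    using Cons.prems(3) by (auto simp: fun_eq_iff)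
  finally have e: "substM 0 (renM Suc w) (psubst \<sigma> \<rho> \<nu> b) = psubst \<sigma> (\<rho>(0 := \<rho> 0 @ [renM Suc w])) \<nu> b" .
  have mf: "\<forall>a. \<forall>x\<in>set ((\<rho>(0 := \<rho> 0 @ [renM Suc w])) a). mfree 0 x"
    using Cons.prems(2) by (auto simp: mfree_renM_0)
  let ?r = "\<rho>(0 := \<rho> 0 @ [renM Suc w])"
  have "foldl (\<lambda>x w. substM 0 (renM Suc w) x) (psubst \<sigma> ?r \<nu> b) ws
     = psubst \<sigma> (?r(0 := ?r 0 @ map (renM Suc) ws)) \<nu> b"
    by (rule Cons.IH[OF Cons.prems(1) mf Cons.prems(3)])
  then have IHf: "foldl (\<lambda>x w. substM 0 (renM Suc w) x) (psubst \<sigma> ?r \<nu> b) ws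
     = psubst \<sigma> (\<rho>(0 := \<rho> 0 @ renM Suc w # map (renM Suc) ws)) \<nu> b" by simp
  have fe: "\<rho>(0 := \<rho> 0 @ renM Suc w # map (renM Suc) ws) = (\<lambda>a. if a = 0 then \<rho> 0 @ renM Suc w # map (renM Suc) ws else \<rho> a)"
    by (auto simp: fun_eq_iff)
  have "foldl (\<lambda>x w. substM 0 (renM Suc w) x) (psubst \<sigma> \<rho> \<nu> b) (w # ws) = psubst \<sigma> (\<rho>(0 := \<rho> 0 @ renM Suc w # map (renM Suc) ws)) \<nu> b"
    using IHf e by simp
  then show ?case using fe by simp
qed

lemma sound:
  "typing \<Gamma> \<Delta> t A \<Longrightarrow> (\<forall>i<length \<Gamma>. \<sigma> i \<in> I (\<Gamma>!i)) \<Longrightarrow> (\<forall>a<length \<Delta>. \<rho> a \<in> canon (\<Delta>!a))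
   \<Longrightarrow> psubst \<sigma> \<rho> \<nu> t \<in> I A"
proof (induction \<Gamma> \<Delta> t A arbitrary: \<sigma> \<rho> \<nu> rule: typing.induct)
  case (ax i \<Gamma> A \<Delta>)
  then show ?case by auto
next
  case (arrI A \<Gamma> \<Delta> t B)
  show ?case
  proof (simp only: I.simps mem_Collect_eq, intro allI ballI)
    fix r s assume s: "s \<in> I A"
    define \<sigma>' where "\<sigma>' = (\<lambda>i. renM r (\<sigma> i))"
    define \<rho>' where "\<rho>' = (\<lambda>a. map (renM r) (\<rho> a))"
    define \<sigma>'' where "\<sigma>'' = (\<lambda>i. case i of 0 \<Rightarrow> s | Suc j \<Rightarrow> \<sigma>' j)"
    have e1: "renM r (psubst \<sigma> \<rho> \<nu> (Lam t)) = Lam (psubst (upL \<sigma>') (\<lambda>a. map (liftL 0) (\<rho>' a)) (\<lambda>a. r (\<nu> a)) t)"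
      by (subst renM_psubst) (simp add: \<sigma>'_def \<rho>'_def)
    have e2: "substL 0 s (psubst (upL \<sigma>') (\<lambda>a. map (liftL 0) (\<rho>' a)) (\<lambda>a. r (\<nu> a)) t)
       = psubst \<sigma>'' \<rho>' (\<lambda>a. r (\<nu> a)) t"
    proof -
      have "(\<lambda>i. substL 0 s (upL \<sigma>' i)) = \<sigma>''"
        by (auto simp: fun_eq_iff \<sigma>''_def upL_def substL_liftL_id split: nat.splits)
      moreover have "(\<lambda>a. map (substL 0 s) (map (liftL 0) (\<rho>' a))) = \<rho>'"
        by (auto simp: fun_eq_iff substL_liftL_id comp_def intro: map_idI)
      ultimately show ?thesis by (simp add: substL_psubst)
    qed
    have "psubst \<sigma>'' \<rho>' (\<lambda>a. r (\<nu> a)) t \<in> I B"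
    proof (rule arrI.IH)
      show "\<forall>i<length (A # \<Gamma>). \<sigma>'' i \<in> I ((A # \<Gamma>) ! i)"
        using s arrI.prems(1) by (auto simp: \<sigma>''_def \<sigma>'_def I_renM split: nat.splits)
      show "\<forall>a<length \<Delta>. \<rho>' a \<in> canon (\<Delta> ! a)"
        using arrI.prems(2) by (auto simp: \<rho>'_def canon_renM)
    qed
    moreover have "red (App (renM r (psubst \<sigma> \<rho> \<nu> (Lam t))) s) (psubst \<sigma>'' \<rho>' (\<lambda>a. r (\<nu> a)) t)"
      unfolding e1 e2[symmetric] by (rule r_into_rtranclp, rule red1.beta)
    ultimately show "App (renM r (psubst \<sigma> \<rho> \<nu> (Lam t))) s \<in> I B" by (rule I_red[rotated])
  qed
next
  case (arrE \<Gamma> \<Delta> u A B v)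
  have "psubst \<sigma> \<rho> \<nu> u \<in> I (Arr A B)" using arrE by blast
  moreover have "psubst \<sigma> \<rho> \<nu> v \<in> I A" using arrE by blast
  ultimately show ?case by (auto dest: spec[of _ id])
next
  case (muI \<Gamma> A \<Delta> t)
  show ?case
  proof (rule canon_I)
    fix r ws assume ws: "ws \<in> canon A"
    define \<sigma>' where "\<sigma>' = (\<lambda>i. renM Suc (renM r (\<sigma> i)))"
    define \<rho>' where "\<rho>' = shiftR (\<lambda>a. map (renM r) (\<rho> a))"
    define \<nu>' where "\<nu>' = extr (\<lambda>a. r (\<nu> a))"
    have e1: "renM r (psubst \<sigma> \<rho> \<nu> (Mu t)) = Mu (psubst \<sigma>' \<rho>' \<nu>' t)"
      by (subst renM_psubst) (simp add: \<sigma>'_def \<rho>'_def \<nu>'_def)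
    have red: "red (apps (Mu (psubst \<sigma>' \<rho>' \<nu>' t)) ws) (Mu (psubst \<sigma>' (\<rho>'(0 := \<rho>' 0 @ map (renM Suc) ws)) \<nu>' t))"
    proof -
      have "foldl (\<lambda>x w. substM 0 (renM Suc w) x) (psubst \<sigma>' \<rho>' \<nu>' t) ws
          = psubst \<sigma>' (\<rho>'(0 := \<rho>' 0 @ map (renM Suc) ws)) \<nu>' t"
      proof (rule foldl_psubst)
        show "\<forall>i. mfree 0 (\<sigma>' i)" by (simp add: \<sigma>'_def mfree_renM_0)
        show "\<forall>a. \<forall>x\<in>set (\<rho>' a). mfree 0 x"
          by (auto simp: \<rho>'_def shiftR_def mfree_renM_0 split: nat.splits)
        show "\<forall>a. (\<nu>' a = 0) = (a = 0)"
          by (auto simp: \<nu>'_def extr_def split: nat.splits)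
      qed
      then show ?thesis using red_apps_Mu[of "psubst \<sigma>' \<rho>' \<nu>' t" ws] by simp
    qed
    have "psubst \<sigma>' (\<rho>'(0 := \<rho>' 0 @ map (renM Suc) ws)) \<nu>' t \<in> I Bot"
    proof (rule muI.IH)
      show "\<forall>i<length \<Gamma>. \<sigma>' i \<in> I (\<Gamma> ! i)"
        using muI.prems(1) by (auto simp: \<sigma>'_def I_renM)
      show "\<forall>a<length (A # \<Delta>). (\<rho>'(0 := \<rho>' 0 @ map (renM Suc) ws)) a \<in> canon ((A # \<Delta>) ! a)"
      proof (intro allI impI)
        fix a assume a: "a < length (A # \<Delta>)"
        show "(\<rho>'(0 := \<rho>' 0 @ map (renM Suc) ws)) a \<in> canon ((A # \<Delta>) ! a)"
        proof (cases a)
          case 0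
          then show ?thesis using ws by (simp add: \<rho>'_def canon_renM)
        next
          case (Suc j)
          then have "\<rho> j \<in> canon (\<Delta> ! j)" using a muI.prems(2) by simp
          then have "map (renM Suc) (map (renM r) (\<rho> j)) \<in> canon (\<Delta> ! j)"
            by (intro canon_renM)
          then show ?thesis using Suc by (simp add: \<rho>'_def)
        qed
      qed
    qed
    then have "Mu (psubst \<sigma>' (\<rho>'(0 := \<rho>' 0 @ map (renM Suc) ws)) \<nu>' t) \<in> Pole"
      by (simp add: Pole_Mu)
    then show "apps (renM r (psubst \<sigma> \<rho> \<nu> (Mu t))) ws \<in> Pole"
      unfolding e1 using red Pole_red by blast
  qed
next
  case (botI a \<Delta> A \<Gamma> t)
  have "psubst \<sigma> \<rho> \<nu> t \<in> I A" using botI by blast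
  moreover have "\<rho> a \<in> canon A" using botI by auto
  ultimately show ?case by (simp add: I_canon Pole_Named)
qed

lemma psubst_id:
  "typing \<Gamma> \<Delta> t A \<Longrightarrow> (\<forall>i<length \<Gamma>. \<sigma> i = Var i) \<Longrightarrow> (\<forall>a<length \<Delta>. \<rho> a = [] \<and> \<nu> a = a)
   \<Longrightarrow> psubst \<sigma> \<rho> \<nu> t = t"
proof (induction \<Gamma> \<Delta> t A arbitrary: \<sigma> \<rho> \<nu> rule: typing.induct)
  case (arrI A \<Gamma> \<Delta> t B)
  have "\<forall>i<length (A # \<Gamma>). upL \<sigma> i = Var i"
    using arrI.prems(1) by (auto simp: upL_def split: nat.splits)
  moreover have "\<forall>a<length \<Delta>. map (liftL 0) (\<rho> a) = [] \<and> \<nu> a = a" using arrI.prems(2) by auto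
  ultimately show ?case using arrI.IH by simp
next
  case (muI \<Gamma> A \<Delta> t)
  have "\<forall>i<length \<Gamma>. renM Suc (\<sigma> i) = Var i"
    using muI.prems(1) by auto
  moreover have "\<forall>a<length (A # \<Delta>). shiftR \<rho> a = [] \<and> extr \<nu> a = a"
    using muI.prems(2) by (auto simp: shiftR_def extr_def split: nat.splits)
  ultimately show ?case using muI.IH by simp
qed auto

lemma substL_closed: "typing \<Gamma> \<Delta> t A \<Longrightarrow> length \<Gamma> \<le> k \<Longrightarrow> substL k s t = t"
  by (induction \<Gamma> \<Delta> t A arbitrary: k s rule: typing.induct) auto

lemma inM_substL: "inM t w \<Longrightarrow> t = Var k \<Longrightarrow> inM s (substL k s w)"
proof (induction t w arbitrary: s rule: inM.induct)
  case (base t)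
  then show ?case by (simp add: inM.base)
next
  case (named t w a)
  then show ?case by (simp add: inM.named)
next
  case (mu t w)
  then have "inM (renM Suc s) (substL k (renM Suc s) w)" by simp
  then show ?case using inM.mu[of s] by simp
qed

theorem mainTheorem8:
  fixes e u :: trm and vs :: "trm list" and X :: nat
  assumes "closed e"
    and "typing [] [] e (Arr Bot (PV X))"
  shows "\<exists>w. inM u w \<and> red (apps (App e u) vs) w"
proof -
  have "psubst Var (\<lambda>_. []) id e \<in> I (Arr Bot (PV X))"
    by (rule sound[OF assms(2)]) auto
  moreover have "psubst Var (\<lambda>_. []) id e = e"
    by (rule psubst_id[OF assms(2)]) auto
  ultimately have eI: "e \<in> I (Arr Bot (PV X))" by simp
  have "Var 0 \<in> Pole" unfolding Pole_def by (auto intro: inM.base)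
  have a1: "\<forall>r. \<forall>s\<in>I Bot. App (renM r e) s \<in> I (PV X)"
    using eI by (simp only: I.simps(3) mem_Collect_eq)
  have "App e (Var 0) \<in> I (PV X)"
    using a1[rule_format, where r=id and s="Var 0"] \<open>Var 0 \<in> Pole\<close> by simp
  then have a2: "\<forall>r vs. apps (renM r (App e (Var 0))) vs \<in> Pole"
    unfolding I.simps(2) mem_Collect_eq .
  have "apps (App e (Var 0)) (map (liftL 0) vs) \<in> Pole"
    using a2[rule_format, where r=id and vs="map (liftL 0) vs"] by simp
  then obtain w' where w': "red (apps (App e (Var 0)) (map (liftL 0) vs)) w'" "inM (Var 0) w'"
    unfolding Pole_def by auto
  have "substL 0 u (apps (App e (Var 0)) (map (liftL 0) vs)) = apps (App e u) vs"
    using substL_closed[OF assms(2), of 0 u]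
    by (simp add: substL_apps comp_def substL_liftL_id)
  then have "red (apps (App e u) vs) (substL 0 u w')"
    using red_substL[OF w'(1), of 0 u] by simp
  moreover have "inM u (substL 0 u w')" using inM_substL[OF w'(2)] by simp
  ultimately show ?thesis by blast
qed

end
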